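(* Fix nonnegative integers $\lambda_2\ge\mu_2\ge\nu_2$. For an integer $\lambda_1\ge\lambda_2$, let $N=\lambda_1+\lambda_2$ and consider the partitions $\lambda=(\lambda_1,\lambda_2)$, $\mu=(N-\mu_2,\mu_2)$, $\nu=(N-\nu_2,\nu_2)$ of $N$. Then $g_{\mu,\nu,\lambda}$ is independent of $\lambda_1$ for all $\lambda_1\ge\mu_2+\nu_2$, and this stable value equals $$p_S(\nu_2,\nu_2+\mu_2-\lambda_2)-p_S(\nu_2,\nu_2+\mu_2-\lambda_2-1)=\begin{cases}\lfloor \ell/2\rfloor+1&\text{if } \ell\ge0,\\ 0&\text{if }\ell<0,\end{cases}\qquad\text{where } \ell=\nu_2+\mu_2-\lambda_2 .$$
   Context: The Kronecker coefficient $g_{\mu,\nu,\lambda}$ (for $\ell(\mu),\ell(\nu)\le2$, $\ell(\lambda)\le4$, same weight, parts padded with zeros) is defined by $s_\lambda(x_1y_1,x_1y_2,x_2y_1,x_2y_2)=\sum_{\mu,\nu}g_{\mu,\nu,\lambda}\,s_\mu(x_1,x_2)s_\nu(y_1,y_2)$, with $s$ the Schur polynomials. For integers $n,m$, $p_S(n,m)$ is the number of $(x_1,\dots,x_4)\in\mathbb{Z}_{\ge0}^4$ with $x_1+x_3+x_4=n$, $x_2+x_3+2x_4=m$ (zero if $n<0$ or $m<0$). *)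

theory Defs
  imports Main
begin

text \<open>Partitions are represented as weakly decreasing lists of naturals (padded with zeros).
  Cells of the Young diagram: row i, column j (0-based).\<close>

definition cells :: "nat list \<Rightarrow> (nat \<times> nat) set" where
  "cells la = {(i, j). i < length la \<and> j < la ! i}"

definition ssyt :: "nat \<Rightarrow> nat list \<Rightarrow> (nat \<times> nat \<Rightarrow> nat) \<Rightarrow> bool" where
  "ssyt n la T \<longleftrightarrow>
     (\<forall>c. c \<notin> cells la \<longrightarrow> T c = 0) \<and>
     (\<forall>c\<in>cells la. 1 \<le> T c \<and> T c \<le> n) \<and>
     (\<forall>i j. (i, j) \<in> cells la \<longrightarrow> (i, Suc j) \<in> cells la \<longrightarrow> T (i, j) \<le> T (i, Suc j)) \<and>
     (\<forall>i j. (i, j) \<in> cells la \<longrightarrow> (Suc i, j) \<in> cells la \<longrightarrow> T (i, j) < T (Suc i, j))"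

definition content :: "nat \<Rightarrow> nat list \<Rightarrow> (nat \<times> nat \<Rightarrow> nat) \<Rightarrow> nat list" where
  "content n la T = map (\<lambda>k. card {c \<in> cells la. T c = Suc k}) [0..<n]"

text \<open>Coefficient of the monomial z^alpha (alpha a list of length n) in the Schur
  polynomial s_la(z_1,...,z_n) = sum over SSYT T of z^(content T).\<close>
definition schur_coeff :: "nat \<Rightarrow> nat list \<Rightarrow> nat list \<Rightarrow> nat" where
  "schur_coeff n la alpha = card {T. ssyt n la T \<and> content n la T = alpha}"

text \<open>Coefficient of x1^a1 x2^a2 y1^b1 y2^b2 in s_la(x1y1, x1y2, x2y1, x2y2).\<close>
definition kron_lhs_coeff :: "nat list \<Rightarrow> nat \<Rightarrow> nat \<Rightarrow> nat \<Rightarrow> nat \<Rightarrow> int" where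
  "kron_lhs_coeff la a1 a2 b1 b2 =
     (\<Sum>(p, q, r, s) \<in> {(p, q, r, s). p + q = a1 \<and> r + s = a2 \<and> p + r = b1 \<and> q + s = b2}.
        int (schur_coeff 4 la [p, q, r, s]))"

definition parts2 :: "nat \<Rightarrow> nat list set" where
  "parts2 N = {[N - k, k] | k. 2 * k \<le> N}"

text \<open>Kronecker coefficient g_{mu,nu,la}: the coefficients in
  s_la(x1y1,x1y2,x2y1,x2y2) = sum_{mu,nu} g_{mu,nu,la} s_mu(x1,x2) s_nu(y1,y2),
  compared coefficientwise (mu, nu ranging over partitions of |la| with at most 2 parts).\<close>
definition kron :: "nat list \<Rightarrow> nat list \<Rightarrow> nat list \<Rightarrow> int" where
  "kron mu nu la =
     (THE g :: nat list \<Rightarrow> nat list \<Rightarrow> int.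
        (\<forall>m v. (m \<notin> parts2 (sum_list la) \<or> v \<notin> parts2 (sum_list la)) \<longrightarrow> g m v = 0) \<and>
        (\<forall>a1 a2 b1 b2. kron_lhs_coeff la a1 a2 b1 b2 =
            (\<Sum>m \<in> parts2 (sum_list la). \<Sum>v \<in> parts2 (sum_list la).
               g m v * int (schur_coeff 2 m [a1, a2]) * int (schur_coeff 2 v [b1, b2])))) mu nu"

definition pS :: "int \<Rightarrow> int \<Rightarrow> int" where
  "pS n m = (if n < 0 \<or> m < 0 then 0 else
     int (card {(x1 :: nat, x2 :: nat, x3 :: nat, x4 :: nat).
                 int x1 + int x3 + int x4 = n \<and> int x2 + int x3 + 2 * int x4 = m}))"

end

theory Submission
  imports Defs
begin


definition rowT :: "nat \<Rightarrow> nat \<Rightarrow> nat \<Rightarrow> nat \<Rightarrow> nat" where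
  "rowT L1 L2 L3 j = (if j < L1 then 1 else if j < L2 then 2 else if j < L3 then 3 else 4)"

lemma downclosed_eq:
  assumes "S \<subseteq> {..<n}" "\<And>i j. j \<in> S \<Longrightarrow> i \<le> j \<Longrightarrow> i \<in> S"
  shows "k \<in> S \<longleftrightarrow> k < card S"
proof
  assume "k \<in> S"
  hence "{..k} \<subseteq> S" using assms(2) by auto
  hence "card {..k} \<le> card S" using assms(1) by (meson card_mono finite_lessThan finite_subset)
  thus "k < card S" by simp
next
  assume "k < card S"
  show "k \<in> S"
  proof (rule ccontr)
    assume "k \<notin> S"
    hence "S \<subseteq> {..<k}" using assms(2) by (metis lessThan_iff not_le_imp_less subsetI)
    hence "card S \<le> k" by (metis card_lessThan card_mono finite_lessThan)
    thus False using \<open>k < card S\<close> by simp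
  qed
qed

lemma mono_range:
  assumes "\<And>j. Suc j < n \<Longrightarrow> f j \<le> f (Suc j)" "i \<le> j" "j < n"
  shows "f i \<le> (f j :: nat)"
  using assms(2,3)
proof (induction j rule: dec_induct)
  case base then show ?case by simp
next
  case (step m) then show ?case using assms(1)[of m] by simp
qed

lemma mono_row_iff:
  assumes "\<And>j. Suc j < n \<Longrightarrow> f j \<le> f (Suc j)" "j < n"
  shows "f j \<le> t \<longleftrightarrow> j < card {i. i < n \<and> f i \<le> (t::nat)}"
proof -
  have "j \<in> {i. i < n \<and> f i \<le> t} \<longleftrightarrow> j < card {i. i < n \<and> f i \<le> t}"
    apply (rule downclosed_eq[where n=n])
     apply blast
    using mono_range[where f=f and n=n, OF assms(1)] by fastforce
  thus ?thesis using assms(2) by simp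
qed

lemma card_le_bound: "card {i. i < n \<and> P i} \<le> n"
  by (metis (no_types, lifting) card_lessThan card_mono finite_lessThan lessThan_iff mem_Collect_eq subsetI)

lemma card_le_mono: "(\<And>i. P i \<Longrightarrow> Q i) \<Longrightarrow> card {i. i < n \<and> P i} \<le> card {i. i < (n::nat) \<and> Q i}"
  by (rule card_mono) auto

lemma mono_row_rowT:
  assumes "\<And>j. Suc j < n \<Longrightarrow> f j \<le> f (Suc j)" "j < n" "1 \<le> f j" "f j \<le> 4"
  shows "f j = rowT (card {i. i < n \<and> f i \<le> 1}) (card {i. i < n \<and> f i \<le> 2})
                    (card {i. i < n \<and> f i \<le> 3}) j"
proof -
  note I = mono_row_iff[where f=f and n=n and j=j, OF assms(1,2)]
  show ?thesis using I[of 1] I[of 2] I[of 3] assms(3,4) unfolding rowT_def by auto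
qed

lemma rowT_sets:
  assumes "L1 \<le> L2" "L2 \<le> L3" "L3 \<le> n"
  shows "{j. j < n \<and> rowT L1 L2 L3 j \<le> 1} = {..<L1}"
    "{j. j < n \<and> rowT L1 L2 L3 j \<le> 2} = {..<L2}"
    "{j. j < n \<and> rowT L1 L2 L3 j \<le> 3} = {..<L3}"
    "{j. j < n \<and> rowT L1 L2 L3 j = 1} = {..<L1}"
    "{j. j < n \<and> rowT L1 L2 L3 j = 2} = {L1..<L2}"
    "{j. j < n \<and> rowT L1 L2 L3 j = 3} = {L2..<L3}"
    "{j. j < n \<and> rowT L1 L2 L3 j = 4} = {L3..<n}"
  using assms by (auto simp: rowT_def)

lemma rowT_cards:
  assumes "L1 \<le> L2" "L2 \<le> L3" "L3 \<le> n"
  shows "card {j. j < n \<and> rowT L1 L2 L3 j \<le> 1} = L1"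
    "card {j. j < n \<and> rowT L1 L2 L3 j \<le> 2} = L2"
    "card {j. j < n \<and> rowT L1 L2 L3 j \<le> 3} = L3"
    "card {j. j < n \<and> rowT L1 L2 L3 j = 1} = L1"
    "card {j. j < n \<and> rowT L1 L2 L3 j = 2} = L2 - L1"
    "card {j. j < n \<and> rowT L1 L2 L3 j = 3} = L3 - L2"
    "card {j. j < n \<and> rowT L1 L2 L3 j = 4} = n - L3"
  using rowT_sets[OF assms] by simp_all

lemma cells2: "(i, j) \<in> cells [l1, l2, 0, 0] \<longleftrightarrow> (i = 0 \<and> j < l1) \<or> (i = 1 \<and> j < l2)"
proof -
  have "i < 4 \<longleftrightarrow> i = 0 \<or> i = 1 \<or> i = 2 \<or> i = 3" by auto
  thus ?thesis unfolding cells_def by (auto simp: numeral_eq_Suc)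
qed

lemma cells2_set: "{c \<in> cells [l1, l2, 0, 0]. T c = v} =
   (\<lambda>j. (0, j)) ` {j. j < l1 \<and> T (0, j) = v} \<union> (\<lambda>j. (1, j)) ` {j. j < l2 \<and> T (1, j) = v}"
  by (auto simp: cells2)

lemma card_cells2: "card {c \<in> cells [l1, l2, 0, 0]. T c = v} =
   card {j. j < l1 \<and> T (0, j) = v} + card {j. j < l2 \<and> T (1, j) = v}"
  unfolding cells2_set
  by (subst card_Un_disjoint) (auto simp: card_image inj_on_def)

lemma content2: "content 4 [l1, l2, 0, 0] T =
   map (\<lambda>k. card {j. j < l1 \<and> T (0, j) = Suc k} + card {j. j < l2 \<and> T (1, j) = Suc k}) [0..<4]"
  unfolding content_def card_cells2 ..



definition tab :: "nat \<Rightarrow> nat \<Rightarrow> nat \<times> nat \<times> nat \<times> nat \<times> nat \<Rightarrow> nat \<times> nat \<Rightarrow> nat" where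
  "tab l1 l2 p c = (case p of (A1, A2, A3, B2, B3) \<Rightarrow> case c of (i, j) \<Rightarrow>
     if i = 0 \<and> j < l1 then rowT A1 A2 A3 j else if i = 1 \<and> j < l2 then rowT 0 B2 B3 j else 0)"

definition TS :: "nat \<Rightarrow> nat \<Rightarrow> nat list \<Rightarrow> (nat \<times> nat \<times> nat \<times> nat \<times> nat) set" where
  "TS l1 l2 al = {(A1, A2, A3, B2, B3). A1 \<le> A2 \<and> A2 \<le> A3 \<and> A3 \<le> l1 \<and> B2 \<le> B3 \<and> B3 \<le> l2 \<and>
      B2 \<le> A1 \<and> B3 \<le> A2 \<and> l2 \<le> A3 \<and>
      al = [A1, A2 - A1 + B2, A3 - A2 + (B3 - B2), l1 - A3 + (l2 - B3)]}"

lemma tab_simps: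
  "tab l1 l2 (A1, A2, A3, B2, B3) (0, j) = (if j < l1 then rowT A1 A2 A3 j else 0)"
  "tab l1 l2 (A1, A2, A3, B2, B3) (Suc 0, j) = (if j < l2 then rowT 0 B2 B3 j else 0)"
  by (simp_all add: tab_def)

lemma tab_ssyt:
  assumes "(A1, A2, A3, B2, B3) \<in> TS l1 l2 al"
  shows "ssyt 4 [l1, l2, 0, 0] (tab l1 l2 (A1, A2, A3, B2, B3))"
    "content 4 [l1, l2, 0, 0] (tab l1 l2 (A1, A2, A3, B2, B3)) = al"
proof -
  note a = assms[unfolded TS_def, simplified]
  show "ssyt 4 [l1, l2, 0, 0] (tab l1 l2 (A1, A2, A3, B2, B3))"
    unfolding ssyt_def
  proof (intro conjI allI impI ballI)
    fix c assume "c \<notin> cells [l1, l2, 0, 0]"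
    thus "tab l1 l2 (A1, A2, A3, B2, B3) c = 0"
      by (cases c) (auto simp: cells2 tab_def)
  next
    fix c assume "c \<in> cells [l1, l2, 0, 0]"
    thus "1 \<le> tab l1 l2 (A1, A2, A3, B2, B3) c" "tab l1 l2 (A1, A2, A3, B2, B3) c \<le> 4"
      by (cases c, auto simp: cells2 tab_def rowT_def)+
  next
    fix i j assume "(i, j) \<in> cells [l1, l2, 0, 0]" "(i, Suc j) \<in> cells [l1, l2, 0, 0]"
    thus "tab l1 l2 (A1, A2, A3, B2, B3) (i, j) \<le> tab l1 l2 (A1, A2, A3, B2, B3) (i, Suc j)"
      using a by (auto simp: cells2 tab_def rowT_def)
  next
    fix i j assume "(i, j) \<in> cells [l1, l2, 0, 0]" "(Suc i, j) \<in> cells [l1, l2, 0, 0]"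
    thus "tab l1 l2 (A1, A2, A3, B2, B3) (i, j) < tab l1 l2 (A1, A2, A3, B2, B3) (Suc i, j)"
      using a by (auto simp: cells2 tab_def rowT_def)
  qed
  have r0: "A1 \<le> A2" "A2 \<le> A3" "A3 \<le> l1" and r1: "0 \<le> B2" "B2 \<le> B3" "B3 \<le> l2" using a by auto
  have e0: "\<And>v. {j. j < l1 \<and> tab l1 l2 (A1, A2, A3, B2, B3) (0, j) = v} = {j. j < l1 \<and> rowT A1 A2 A3 j = v}"
    by (auto simp: tab_simps)
  have e1: "\<And>v. {j. j < l2 \<and> tab l1 l2 (A1, A2, A3, B2, B3) (1, j) = v} = {j. j < l2 \<and> rowT 0 B2 B3 j = v}"
    by (auto simp: tab_simps)
  show "content 4 [l1, l2, 0, 0] (tab l1 l2 (A1, A2, A3, B2, B3)) = al"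
    unfolding content2 e0 e1
    using rowT_cards[OF r0] rowT_cards[OF r1] a
    by (simp add: upt_rec numeral_eq_Suc)
qed

lemma tab_inj: "inj_on (tab l1 l2) (TS l1 l2 al)"
proof (rule inj_onI)
  fix p q assume p: "p \<in> TS l1 l2 al" and q: "q \<in> TS l1 l2 al" and e: "tab l1 l2 p = tab l1 l2 q"
  obtain A1 A2 A3 B2 B3 where pp: "p = (A1, A2, A3, B2, B3)" by (cases p) auto
  obtain C1 C2 C3 D2 D3 where qq: "q = (C1, C2, C3, D2, D3)" by (cases q) auto
  note a = p[unfolded pp TS_def, simplified] and b = q[unfolded qq TS_def, simplified]
  have r0: "rowT A1 A2 A3 j = rowT C1 C2 C3 j" if "j < l1" for j
    using fun_cong[OF e, of "(0, j)"] that unfolding pp qq tab_simps by auto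
  have r1: "rowT 0 B2 B3 j = rowT 0 D2 D3 j" if "j < l2" for j
    using fun_cong[OF e, of "(Suc 0, j)"] that unfolding pp qq tab_simps by auto
  have ea: "\<And>v. {j. j < l1 \<and> rowT A1 A2 A3 j \<le> v} = {j. j < l1 \<and> rowT C1 C2 C3 j \<le> v}"
    using r0 by auto
  have eb: "\<And>v. {j. j < l2 \<and> rowT 0 B2 B3 j \<le> v} = {j. j < l2 \<and> rowT 0 D2 D3 j \<le> v}"
    using r1 by auto
  have ra: "A1 \<le> A2" "A2 \<le> A3" "A3 \<le> l1" and rc: "C1 \<le> C2" "C2 \<le> C3" "C3 \<le> l1"
    and rb: "0 \<le> B2" "B2 \<le> B3" "B3 \<le> l2" and rd: "0 \<le> D2" "D2 \<le> D3" "D3 \<le> l2"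
    using a b by auto
  have "A1 = C1" using arg_cong[OF ea[of 1], of card] unfolding rowT_cards(1)[OF ra] rowT_cards(1)[OF rc] .
  moreover have "A2 = C2" using arg_cong[OF ea[of 2], of card] unfolding rowT_cards(2)[OF ra] rowT_cards(2)[OF rc] .
  moreover have "A3 = C3" using arg_cong[OF ea[of 3], of card] unfolding rowT_cards(3)[OF ra] rowT_cards(3)[OF rc] .
  moreover have "B2 = D2" using arg_cong[OF eb[of 2], of card] unfolding rowT_cards(2)[OF rb] rowT_cards(2)[OF rd] .
  moreover have "B3 = D3" using arg_cong[OF eb[of 3], of card] unfolding rowT_cards(3)[OF rb] rowT_cards(3)[OF rd] .
  ultimately show "p = q" unfolding pp qq by simp
qed


lemma tab_content:
  assumes r0: "A1 \<le> A2" "A2 \<le> A3" "A3 \<le> l1" and r1: "B2 \<le> B3" "B3 \<le> l2"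
  shows "content 4 [l1, l2, 0, 0] (tab l1 l2 (A1, A2, A3, B2, B3)) =
     [A1, A2 - A1 + B2, A3 - A2 + (B3 - B2), l1 - A3 + (l2 - B3)]"
proof -
  have r1': "0 \<le> B2" "B2 \<le> B3" "B3 \<le> l2" using r1 by auto
  have e0: "\<And>v. {j. j < l1 \<and> tab l1 l2 (A1, A2, A3, B2, B3) (0, j) = v} = {j. j < l1 \<and> rowT A1 A2 A3 j = v}"
    by (auto simp: tab_simps)
  have e1: "\<And>v. {j. j < l2 \<and> tab l1 l2 (A1, A2, A3, B2, B3) (1, j) = v} = {j. j < l2 \<and> rowT 0 B2 B3 j = v}"
    by (auto simp: tab_simps)
  show ?thesis
    unfolding content2 e0 e1
    using rowT_cards[OF r0] rowT_cards[OF r1']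
    by (simp add: upt_rec numeral_eq_Suc)
qed

lemma tab_surj:
  assumes l: "l2 \<le> l1" and T: "ssyt 4 [l1, l2, 0, 0] T" and c: "content 4 [l1, l2, 0, 0] T = al"
  shows "\<exists>p \<in> TS l1 l2 al. T = tab l1 l2 p"
proof -
  note S = T[unfolded ssyt_def]
  have h0: "T (0, j) \<le> T (0, Suc j)" if "Suc j < l1" for j
    using S that by (auto simp: cells2)
  have h1: "T (1, j) \<le> T (1, Suc j)" if "Suc j < l2" for j
    using S that by (auto simp: cells2)
  have v0: "1 \<le> T (0, j)" "T (0, j) \<le> 4" if "j < l1" for j
    using S that by (auto simp: cells2)
  have v1: "1 \<le> T (1, j)" "T (1, j) \<le> 4" if "j < l2" for j
    using S that by (auto simp: cells2)
  have st: "T (0, j) < T (1, j)" if "j < l2" for j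
    using S that l by (auto simp: cells2)
  have z: "T (i, j) = 0" if "\<not> ((i = 0 \<and> j < l1) \<or> (i = 1 \<and> j < l2))" for i j
    using S that by (auto simp: cells2)
  define A where "A t = card {j. j < l1 \<and> T (0, j) \<le> t}" for t
  define B where "B t = card {j. j < l2 \<and> T (1, j) \<le> t}" for t
  have I0: "T (0, j) \<le> t \<longleftrightarrow> j < A t" if "j < l1" for j t
    unfolding A_def by (rule mono_row_iff[where f="\<lambda>j. T (0, j)"]) (use h0 that in auto)
  have I1: "T (1, j) \<le> t \<longleftrightarrow> j < B t" if "j < l2" for j t
    unfolding B_def by (rule mono_row_iff[where f="\<lambda>j. T (1, j)"]) (use h1 that in auto)
  have B1: "B 1 = 0"
  proof -
    have "{j. j < l2 \<and> T (1, j) \<le> 1} = {}"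
    proof -
      have "\<not> T (1, j) \<le> 1" if "j < l2" for j using st[OF that] v0(1)[of j] that l by linarith
      thus ?thesis by auto
    qed
    thus ?thesis unfolding B_def by simp
  qed
  have R0: "T (0, j) = rowT (A 1) (A 2) (A 3) j" if "j < l1" for j
    unfolding A_def by (rule mono_row_rowT[where f="\<lambda>j. T (0, j)"]) (use h0 v0 that in auto)
  have R1: "T (1, j) = rowT 0 (B 2) (B 3) j" if "j < l2" for j
    using B1 unfolding B_def by (metis (no_types, lifting) mono_row_rowT[where f="\<lambda>j. T (1, j)" and n=l2] h1 v1 that)
  have m: "A 1 \<le> A 2" "A 2 \<le> A 3" "A 3 \<le> l1" "B 2 \<le> B 3" "B 3 \<le> l2"
    unfolding A_def B_def by (auto intro: card_le_mono card_le_bound)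
  have c1: "B 2 \<le> A 1"
  proof (rule ccontr)
    assume "\<not> B 2 \<le> A 1"
    hence j: "A 1 < B 2" "A 1 < l2" using m by auto
    hence "T (1, A 1) \<le> 2" using I1 by auto
    hence "T (0, A 1) \<le> 1" using st[OF j(2)] by simp
    thus False using I0[of "A 1" 1] j l by simp
  qed
  have c2: "B 3 \<le> A 2"
  proof (rule ccontr)
    assume "\<not> B 3 \<le> A 2"
    hence j: "A 2 < B 3" "A 2 < l2" using m by auto
    hence "T (1, A 2) \<le> 3" using I1 by auto
    hence "T (0, A 2) \<le> 2" using st[OF j(2)] by simp
    thus False using I0[of "A 2" 2] j l by simp
  qed
  have c3: "l2 \<le> A 3"
  proof (rule ccontr)
    assume "\<not> l2 \<le> A 3"
    hence j: "A 3 < l2" by auto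
    hence "T (1, A 3) \<le> 4" using v1 by auto
    hence "T (0, A 3) \<le> 3" using st[OF j] by simp
    thus False using I0[of "A 3" 3] j l by simp
  qed
  have TT: "T = tab l1 l2 (A 1, A 2, A 3, B 2, B 3)"
  proof (rule ext, clarify)
    fix i j
    show "T (i, j) = tab l1 l2 (A 1, A 2, A 3, B 2, B 3) (i, j)"
      using R0 R1 z by (cases "i = 0"; cases "i = 1") (auto simp: tab_def)
  qed
  have "al = [A 1, A 2 - A 1 + B 2, A 3 - A 2 + (B 3 - B 2), l1 - A 3 + (l2 - B 3)]"
    using c TT tab_content[OF m] by simp
  hence "(A 1, A 2, A 3, B 2, B 3) \<in> TS l1 l2 al"
    unfolding TS_def using m c1 c2 c3 by (simp add: add.commute)
  thus ?thesis using TT by blast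
qed

lemma schur_TS:
  assumes "l2 \<le> l1"
  shows "schur_coeff 4 [l1, l2, 0, 0] al = card (TS l1 l2 al)"
proof -
  have "{T. ssyt 4 [l1, l2, 0, 0] T \<and> content 4 [l1, l2, 0, 0] T = al} = tab l1 l2 ` TS l1 l2 al"
  proof
    show "{T. ssyt 4 [l1, l2, 0, 0] T \<and> content 4 [l1, l2, 0, 0] T = al} \<subseteq> tab l1 l2 ` TS l1 l2 al"
      using tab_surj[OF assms] by blast
    show "tab l1 l2 ` TS l1 l2 al \<subseteq> {T. ssyt 4 [l1, l2, 0, 0] T \<and> content 4 [l1, l2, 0, 0] T = al}"
      using tab_ssyt by fastforce
  qed
  thus ?thesis unfolding schur_coeff_def by (simp add: card_image tab_inj)
qed



definition KS :: "nat \<Rightarrow> nat \<Rightarrow> nat \<Rightarrow> nat \<Rightarrow> nat \<Rightarrow> nat \<Rightarrow> (nat \<times> nat \<times> nat) set" where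
  "KS l1 l2 a1 a2 a3 a4 = {(x, y, z). x + y + z = l2 \<and> x \<le> a1 \<and> x \<le> a2 \<and> y \<le> a3 \<and> z \<le> a4 \<and>
      2 * x + y \<le> a1 + a2 \<and> l2 + x + y \<le> a1 + a2 + a3 \<and> a1 + a2 + a3 + a4 = l1 + l2}"

lemma TS_KS: "card (TS l1 l2 [a1, a2, a3, a4]) = card (KS l1 l2 a1 a2 a3 a4)"
proof -
  let ?f = "\<lambda>(A1::nat, A2::nat, A3::nat, B2::nat, B3::nat). (B2, B3 - B2, l2 - B3)"
  let ?g = "\<lambda>(x::nat, y::nat, z::nat). (a1, a1 + a2 - x, a1 + a2 + a3 - (x + y), x, x + y)"
  have "bij_betw ?f (TS l1 l2 [a1, a2, a3, a4]) (KS l1 l2 a1 a2 a3 a4)"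
  proof (rule bij_betw_byWitness[where f'="?g"])
    show "\<forall>a\<in>TS l1 l2 [a1, a2, a3, a4]. ?g (?f a) = a"
      by (auto simp: TS_def)
    show "\<forall>a\<in>KS l1 l2 a1 a2 a3 a4. ?f (?g a) = a"
      by (auto simp: KS_def)
    show "?f ` TS l1 l2 [a1, a2, a3, a4] \<subseteq> KS l1 l2 a1 a2 a3 a4"
      by (auto simp: TS_def KS_def)
    show "?g ` KS l1 l2 a1 a2 a3 a4 \<subseteq> TS l1 l2 [a1, a2, a3, a4]"
      by (auto simp: TS_def KS_def)
  qed
  thus ?thesis by (rule bij_betw_same_card)
qed

definition K :: "nat \<Rightarrow> nat \<Rightarrow> nat \<Rightarrow> nat \<Rightarrow> nat \<Rightarrow> nat \<Rightarrow> nat" where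
  "K l1 l2 a1 a2 a3 a4 = card (KS l1 l2 a1 a2 a3 a4)"

lemma schur_K: "l2 \<le> l1 \<Longrightarrow> schur_coeff 4 [l1, l2, 0, 0] [a1, a2, a3, a4] = K l1 l2 a1 a2 a3 a4"
  by (simp add: schur_TS TS_KS K_def)

lemma K_sym12: "K l1 l2 a1 a2 a3 a4 = K l1 l2 a2 a1 a3 a4"
  unfolding K_def KS_def by (rule arg_cong[where f=card]) (auto simp: add.commute add.left_commute)

lemma K_sym23: "K l1 l2 a1 a2 a3 a4 = K l1 l2 a1 a3 a2 a4"
proof -
  let ?m = "\<lambda>(x::nat, y::nat, z::nat). (y - (x + y - a1), x + (x + y - a1), z)"
  have "bij_betw ?m (KS l1 l2 a1 a2 a3 a4) (KS l1 l2 a1 a3 a2 a4)"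
  proof (rule bij_betw_byWitness[where f'="?m"])
    show "\<forall>a\<in>KS l1 l2 a1 a2 a3 a4. ?m (?m a) = a"
      by (auto simp: KS_def)
    show "\<forall>a\<in>KS l1 l2 a1 a3 a2 a4. ?m (?m a) = a"
      by (auto simp: KS_def)
    show "?m ` KS l1 l2 a1 a2 a3 a4 \<subseteq> KS l1 l2 a1 a3 a2 a4"
      by (auto simp: KS_def)
    show "?m ` KS l1 l2 a1 a3 a2 a4 \<subseteq> KS l1 l2 a1 a2 a3 a4"
      by (auto simp: KS_def)
  qed
  thus ?thesis unfolding K_def by (rule bij_betw_same_card)
qed

lemma K_sym34: "K l1 l2 a1 a2 a3 a4 = K l1 l2 a1 a2 a4 a3"
proof -
  let ?m = "\<lambda>(x::nat, y::nat, z::nat). (x, z - (x + y + z + x - (a1 + a2)), y + (x + y + z + x - (a1 + a2)))"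
  have "bij_betw ?m (KS l1 l2 a1 a2 a3 a4) (KS l1 l2 a1 a2 a4 a3)"
  proof (rule bij_betw_byWitness[where f'="?m"])
    show "\<forall>a\<in>KS l1 l2 a1 a2 a3 a4. ?m (?m a) = a"
      by (auto simp: KS_def)
    show "\<forall>a\<in>KS l1 l2 a1 a2 a4 a3. ?m (?m a) = a"
      by (auto simp: KS_def)
    show "?m ` KS l1 l2 a1 a2 a3 a4 \<subseteq> KS l1 l2 a1 a2 a4 a3"
      by (auto simp: KS_def)
    show "?m ` KS l1 l2 a1 a2 a4 a3 \<subseteq> KS l1 l2 a1 a2 a3 a4"
      by (auto simp: KS_def)
  qed
  thus ?thesis unfolding K_def by (rule bij_betw_same_card)
qed

lemma K_symA: "K l1 l2 p q r s = K l1 l2 r s p q"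
  by (metis K_sym12 K_sym23 K_sym34)

lemma K_symB: "K l1 l2 p q r s = K l1 l2 q p s r"
  by (metis K_sym12 K_sym34)

lemma K_sum: "a1 + a2 + a3 + a4 \<noteq> l1 + l2 \<Longrightarrow> K l1 l2 a1 a2 a3 a4 = 0"
proof -
  assume "a1 + a2 + a3 + a4 \<noteq> l1 + l2"
  hence "KS l1 l2 a1 a2 a3 a4 = {}" unfolding KS_def by auto
  thus ?thesis unfolding K_def by simp
qed



lemma cells_2_4: "cells [l1, l2] = cells [l1, l2, 0, 0]"
proof -
  have "(i, j) \<in> cells [l1, l2] \<longleftrightarrow> (i = 0 \<and> j < l1) \<or> (i = 1 \<and> j < l2)" for i j
  proof -
    have "i < 2 \<longleftrightarrow> i = 0 \<or> i = 1" by auto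
    thus ?thesis unfolding cells_def by auto
  qed
  thus ?thesis using cells2 by auto
qed

lemma finite_cells: "finite (cells [l1, l2, 0, 0])"
proof -
  have "cells [l1, l2, 0, 0] \<subseteq> {..<2} \<times> {..<l1 + l2}"
    by (auto simp: cells2)
  thus ?thesis by (rule finite_subset) simp
qed

lemma schur2_eq: "schur_coeff 2 [l1, l2] [a1, a2] = schur_coeff 4 [l1, l2, 0, 0] [a1, a2, 0, 0]"
proof -
  let ?c = "cells [l1, l2, 0, 0]"
  have "{T. ssyt 2 [l1, l2] T \<and> content 2 [l1, l2] T = [a1, a2]} =
        {T. ssyt 4 [l1, l2, 0, 0] T \<and> content 4 [l1, l2, 0, 0] T = [a1, a2, 0, 0]}"
  proof (rule set_eqI, rule iffI)
    fix T assume "T \<in> {T. ssyt 2 [l1, l2] T \<and> content 2 [l1, l2] T = [a1, a2]}"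
    hence s: "ssyt 2 [l1, l2] T" and c: "content 2 [l1, l2] T = [a1, a2]" by auto
    have v: "T x \<le> 2" if "x \<in> ?c" for x using s that unfolding ssyt_def cells_2_4 by auto
    have e3: "{x \<in> ?c. T x = 3} = {}" "{x \<in> ?c. T x = 4} = {}" using v by fastforce+
    have z3: "card {x \<in> ?c. T x = 3} = 0" "card {x \<in> ?c. T x = 4} = 0" by (simp_all only: e3 card.empty)
    have "ssyt 4 [l1, l2, 0, 0] T" using s unfolding ssyt_def cells_2_4 by fastforce
    moreover have "content 4 [l1, l2, 0, 0] T = [a1, a2, 0, 0]"
      using c z3 unfolding content_def cells_2_4 by (simp add: upt_rec numeral_eq_Suc)
    ultimately show "T \<in> {T. ssyt 4 [l1, l2, 0, 0] T \<and> content 4 [l1, l2, 0, 0] T = [a1, a2, 0, 0]}" by simp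
  next
    fix T assume "T \<in> {T. ssyt 4 [l1, l2, 0, 0] T \<and> content 4 [l1, l2, 0, 0] T = [a1, a2, 0, 0]}"
    hence s: "ssyt 4 [l1, l2, 0, 0] T" and c: "content 4 [l1, l2, 0, 0] T = [a1, a2, 0, 0]" by auto
    have z: "card {x \<in> ?c. T x = 3} = 0" "card {x \<in> ?c. T x = 4} = 0"
      using c unfolding content_def by (simp_all add: upt_rec numeral_eq_Suc)
    have f3: "finite {x \<in> ?c. T x = 3}" "finite {x \<in> ?c. T x = 4}" using finite_cells[of l1 l2] by simp_all
    have e3: "{x \<in> ?c. T x = 3} = {}" "{x \<in> ?c. T x = 4} = {}"
      using z f3 card_0_eq by blast+
    have v: "T x \<le> 2" if "x \<in> ?c" for x
    proof -
      have "T x \<le> 4" using s that unfolding ssyt_def by auto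
      moreover have "T x \<noteq> 3" "T x \<noteq> 4" using e3 that by blast+
      ultimately show ?thesis by linarith
    qed
    have "ssyt 2 [l1, l2] T" using s v unfolding ssyt_def cells_2_4 by fastforce
    moreover have "content 2 [l1, l2] T = [a1, a2]"
      using c unfolding content_def cells_2_4 by (simp add: upt_rec numeral_eq_Suc)
    ultimately show "T \<in> {T. ssyt 2 [l1, l2] T \<and> content 2 [l1, l2] T = [a1, a2]}" by simp
  qed
  thus ?thesis unfolding schur_coeff_def by simp
qed

lemma schur2: "l2 \<le> l1 \<Longrightarrow> schur_coeff 2 [l1, l2] [a1, a2] =
   (if a1 + a2 = l1 + l2 \<and> l2 \<le> a1 \<and> l2 \<le> a2 then 1 else 0)"
proof -
  assume l: "l2 \<le> l1"
  have "KS l1 l2 a1 a2 0 0 = (if a1 + a2 = l1 + l2 \<and> l2 \<le> a1 \<and> l2 \<le> a2 then {(l2, 0, 0)} else {})"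
    unfolding KS_def by auto
  thus ?thesis unfolding schur2_eq schur_K[OF l] K_def by simp
qed



definition Tab :: "nat \<Rightarrow> nat \<Rightarrow> nat \<Rightarrow> nat \<Rightarrow> (nat \<times> nat \<times> nat \<times> nat) set" where
  "Tab a1 a2 b1 b2 = {(p, q, r, s). p + q = a1 \<and> r + s = a2 \<and> p + r = b1 \<and> q + s = b2}"

lemma lhs_K: "l2 \<le> l1 \<Longrightarrow> kron_lhs_coeff [l1, l2, 0, 0] a1 a2 b1 b2 =
    (\<Sum>(p, q, r, s) \<in> Tab a1 a2 b1 b2. int (K l1 l2 p q r s))"
  unfolding kron_lhs_coeff_def Tab_def by (simp add: schur_K)

lemma lhs_symA: assumes "l2 \<le> l1"
  shows "kron_lhs_coeff [l1, l2, 0, 0] a1 a2 b1 b2 = kron_lhs_coeff [l1, l2, 0, 0] a2 a1 b1 b2"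
  unfolding lhs_K[OF assms]
proof (rule sum.reindex_bij_witness[where i="\<lambda>(p, q, r, s). (r, s, p, q)" and j="\<lambda>(p, q, r, s). (r, s, p, q)"])
qed (auto simp: Tab_def K_symA[of l1 l2 _ _ _ _])

lemma lhs_symB: assumes "l2 \<le> l1"
  shows "kron_lhs_coeff [l1, l2, 0, 0] a1 a2 b1 b2 = kron_lhs_coeff [l1, l2, 0, 0] a1 a2 b2 b1"
  unfolding lhs_K[OF assms]
proof (rule sum.reindex_bij_witness[where i="\<lambda>(p, q, r, s). (q, p, s, r)" and j="\<lambda>(p, q, r, s). (q, p, s, r)"])
qed (auto simp: Tab_def K_symB[of l1 l2 _ _ _ _])

lemma lhs_zeroA: assumes "l2 \<le> l1" "a1 + a2 \<noteq> l1 + l2"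
  shows "kron_lhs_coeff [l1, l2, 0, 0] a1 a2 b1 b2 = 0"
  unfolding lhs_K[OF assms(1)]
  using assms(2) by (intro sum.neutral) (auto simp: Tab_def intro!: K_sum)

lemma lhs_zeroB: assumes "l2 \<le> l1" "b1 + b2 \<noteq> l1 + l2"
  shows "kron_lhs_coeff [l1, l2, 0, 0] a1 a2 b1 b2 = 0"
  unfolding lhs_K[OF assms(1)]
  using assms(2) by (intro sum.neutral) (auto simp: Tab_def intro!: K_sum)



definition F :: "nat \<Rightarrow> nat \<Rightarrow> nat \<Rightarrow> nat \<Rightarrow> int" where
  "F l1 l2 a b = (if a = 0 \<or> b = 0 then 0 else
     kron_lhs_coeff [l1, l2, 0, 0] (l1 + l2 - (a - 1)) (a - 1) (l1 + l2 - (b - 1)) (b - 1))"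

definition D :: "nat \<Rightarrow> nat \<Rightarrow> nat \<Rightarrow> nat \<Rightarrow> int" where
  "D l1 l2 k j = F l1 l2 (Suc k) (Suc j) - F l1 l2 k (Suc j) - F l1 l2 (Suc k) j + F l1 l2 k j"

lemma telescope2:
  fixes f :: "nat \<Rightarrow> nat \<Rightarrow> int"
  shows "(\<Sum>k<a. \<Sum>j<b. f (Suc k) (Suc j) - f k (Suc j) - f (Suc k) j + f k j) = f a b - f 0 b - f a 0 + f 0 0"
proof -
  have i: "(\<Sum>j<b. f (Suc k) (Suc j) - f k (Suc j) - f (Suc k) j + f k j) =
           (f (Suc k) b - f k b) - (f (Suc k) 0 - f k 0)" for k
  proof -
    have "(\<Sum>j<b. f (Suc k) (Suc j) - f k (Suc j) - f (Suc k) j + f k j) =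
          (\<Sum>j<b. (\<lambda>j. f (Suc k) j - f k j) (Suc j) - (\<lambda>j. f (Suc k) j - f k j) j)"
      by (rule sum.cong) auto
    also have "\<dots> = (f (Suc k) b - f k b) - (f (Suc k) 0 - f k 0)"
      by (rule sum_lessThan_telescope)
    finally show ?thesis .
  qed
  have "(\<Sum>k<a. \<Sum>j<b. f (Suc k) (Suc j) - f k (Suc j) - f (Suc k) j + f k j) =
        (\<Sum>k<a. (\<lambda>k. f k b - f k 0) (Suc k) - (\<lambda>k. f k b - f k 0) k)"
    unfolding i by (rule sum.cong) auto
  also have "\<dots> = f a b - f 0 b - f a 0 + f 0 0"
    by (subst sum_lessThan_telescope) simp
  finally show ?thesis .
qed

lemma diff2:
  fixes G :: "nat \<Rightarrow> nat \<Rightarrow> int"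
  defines "S \<equiv> \<lambda>a b. \<Sum>k<a. \<Sum>j<b. G k j"
  shows "G k j = S (Suc k) (Suc j) - S k (Suc j) - S (Suc k) j + S k j"
  unfolding S_def by (simp add: sum.distrib[symmetric] algebra_simps)

lemma sum_restrict:
  fixes f :: "nat \<Rightarrow> int"
  assumes "al \<le> M"
  shows "(\<Sum>k\<in>{..M}. if k \<le> al then f k else 0) = (\<Sum>k<Suc al. f k)"
proof -
  have "(\<Sum>k\<in>{..M}. if k \<le> al then f k else 0) = sum f {k \<in> {..M}. k \<le> al}"
    by (rule sum.inter_filter[symmetric]) simp
  also have "{k \<in> {..M}. k \<le> al} = {..<Suc al}" using assms by auto
  finally show ?thesis .
qed

lemma parts2_img: "parts2 N = (\<lambda>k. [N - k, k]) ` {..N div 2}"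
  unfolding parts2_def by auto

lemma parts2_inj: "inj_on (\<lambda>k. [N - k, k]) A"
  by (auto simp: inj_on_def)

lemma rhs_eq:
  fixes g :: "nat list \<Rightarrow> nat list \<Rightarrow> int"
  shows "(\<Sum>m\<in>parts2 N. \<Sum>v\<in>parts2 N. g m v * int (schur_coeff 2 m [a1, a2]) * int (schur_coeff 2 v [b1, b2]))
   = (if a1 + a2 = N \<and> b1 + b2 = N then (\<Sum>k<Suc (min a1 a2). \<Sum>j<Suc (min b1 b2). g [N - k, k] [N - j, j]) else 0)"
proof -
  have sc: "int (schur_coeff 2 [N - k, k] [a1, a2]) = (if a1 + a2 = N \<and> k \<le> min a1 a2 then 1 else 0)"
    if "k \<in> {..N div 2}" for k a1 a2
    using that by (subst schur2) auto
  have "(\<Sum>m\<in>parts2 N. \<Sum>v\<in>parts2 N. g m v * int (schur_coeff 2 m [a1, a2]) * int (schur_coeff 2 v [b1, b2]))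
     = (\<Sum>k\<in>{..N div 2}. \<Sum>j\<in>{..N div 2}. g [N - k, k] [N - j, j] * int (schur_coeff 2 [N - k, k] [a1, a2]) * int (schur_coeff 2 [N - j, j] [b1, b2]))"
    unfolding parts2_img by (simp add: sum.reindex parts2_inj)
  also have "\<dots> = (\<Sum>k\<in>{..N div 2}. if k \<le> min a1 a2 then (if a1 + a2 = N then
        (\<Sum>j\<in>{..N div 2}. if j \<le> min b1 b2 then (if b1 + b2 = N then g [N - k, k] [N - j, j] else 0) else 0) else 0) else 0)"
    by (rule sum.cong[OF refl], simp only: sc, rule trans[OF _ sym[OF if_distrib[where f="\<lambda>x. x"]]],
        auto intro!: sum.cong simp: sc)
  also have "\<dots> = (if a1 + a2 = N \<and> b1 + b2 = N then (\<Sum>k<Suc (min a1 a2). \<Sum>j<Suc (min b1 b2). g [N - k, k] [N - j, j]) else 0)"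
  proof (cases "a1 + a2 = N \<and> b1 + b2 = N")
    case True
    hence m: "min a1 a2 \<le> N div 2" "min b1 b2 \<le> N div 2" by auto
    have t1: "(a1 + a2 = N) = True" "(b1 + b2 = N) = True" using True by simp_all
    show ?thesis by (simp only: t1 if_True simp_thms sum_restrict[OF m(2)] sum_restrict[OF m(1)])
  next
    case False
    then show ?thesis by (auto intro!: sum.neutral)
  qed
  finally show ?thesis .
qed



lemma lhs_key:
  assumes l: "l2 \<le> l1"
  shows "kron_lhs_coeff [l1, l2, 0, 0] a1 a2 b1 b2 =
    (if a1 + a2 = l1 + l2 \<and> b1 + b2 = l1 + l2 then F l1 l2 (Suc (min a1 a2)) (Suc (min b1 b2)) else 0)"
proof (cases "a1 + a2 = l1 + l2 \<and> b1 + b2 = l1 + l2")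
  case True
  have hh: "l1 + l2 - a1 = a2" "l1 + l2 - a2 = a1" "l1 + l2 - b1 = b2" "l1 + l2 - b2 = b1" using True by auto
  have "kron_lhs_coeff [l1, l2, 0, 0] a1 a2 b1 b2 =
        kron_lhs_coeff [l1, l2, 0, 0] (l1 + l2 - min a1 a2) (min a1 a2) b1 b2"
  proof (cases "a1 \<le> a2")
    case True
    then show ?thesis using \<open>a1 + a2 = l1 + l2 \<and> b1 + b2 = l1 + l2\<close> lhs_symA[OF l, of a1 a2 b1 b2]
      by (simp add: min_def hh)
  next
    case False
    then show ?thesis using \<open>a1 + a2 = l1 + l2 \<and> b1 + b2 = l1 + l2\<close> by (simp add: min_def hh)
  qed
  also have "\<dots> = kron_lhs_coeff [l1, l2, 0, 0] (l1 + l2 - min a1 a2) (min a1 a2) (l1 + l2 - min b1 b2) (min b1 b2)"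
  proof (cases "b1 \<le> b2")
    case True
    then show ?thesis using \<open>a1 + a2 = l1 + l2 \<and> b1 + b2 = l1 + l2\<close> lhs_symB[OF l, of _ _ b1 b2]
      by (simp add: min_def hh)
  next
    case False
    then show ?thesis using \<open>a1 + a2 = l1 + l2 \<and> b1 + b2 = l1 + l2\<close> by (simp add: min_def hh)
  qed
  finally show ?thesis using True by (simp add: F_def)
next
  case False
  then show ?thesis using lhs_zeroA[OF l] lhs_zeroB[OF l] by auto
qed

lemma kron_D:
  assumes l: "l2 \<le> l1" and a: "2 * a \<le> l1 + l2" and b: "2 * b \<le> l1 + l2"
  shows "kron [l1 + l2 - a, a] [l1 + l2 - b, b] [l1, l2, 0, 0] = D l1 l2 a b"
proof -
  define N where "N = l1 + l2"
  define g0 where "g0 m v = (if m \<in> parts2 N \<and> v \<in> parts2 N then D l1 l2 (m ! 1) (v ! 1) else 0)" for m v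
  define P where "P g \<longleftrightarrow> (\<forall>m v. (m \<notin> parts2 N \<or> v \<notin> parts2 N) \<longrightarrow> g m v = 0) \<and>
        (\<forall>a1 a2 b1 b2. kron_lhs_coeff [l1, l2, 0, 0] a1 a2 b1 b2 =
            (\<Sum>m \<in> parts2 N. \<Sum>v \<in> parts2 N.
               g m v * int (schur_coeff 2 m [a1, a2]) * int (schur_coeff 2 v [b1, b2])))" for g :: "nat list \<Rightarrow> nat list \<Rightarrow> int"
  have kd: "kron mu nu [l1, l2, 0, 0] = (THE g. P g) mu nu" for mu nu
    unfolding kron_def P_def N_def by simp
  have inP: "[N - k, k] \<in> parts2 N" if "2 * k \<le> N" for k
    using that unfolding parts2_def by auto
  have F0: "F l1 l2 0 b = 0" "F l1 l2 a 0 = 0" for a b by (simp_all add: F_def)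
  have Pg0: "P g0"
    unfolding P_def
  proof (intro conjI allI impI)
    fix m v assume "m \<notin> parts2 N \<or> v \<notin> parts2 N"
    thus "g0 m v = 0" unfolding g0_def by auto
  next
    fix a1 a2 b1 b2
    show "kron_lhs_coeff [l1, l2, 0, 0] a1 a2 b1 b2 =
      (\<Sum>m \<in> parts2 N. \<Sum>v \<in> parts2 N. g0 m v * int (schur_coeff 2 m [a1, a2]) * int (schur_coeff 2 v [b1, b2]))"
    proof (cases "a1 + a2 = N \<and> b1 + b2 = N")
      case True
      have "(\<Sum>k<Suc (min a1 a2). \<Sum>j<Suc (min b1 b2). g0 [N - k, k] [N - j, j]) =
            (\<Sum>k<Suc (min a1 a2). \<Sum>j<Suc (min b1 b2). D l1 l2 k j)"
      proof (intro sum.cong refl)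
        fix k j assume "k \<in> {..<Suc (min a1 a2)}" "j \<in> {..<Suc (min b1 b2)}"
        hence "2 * k \<le> N" "2 * j \<le> N" using True by auto
        thus "g0 [N - k, k] [N - j, j] = D l1 l2 k j" unfolding g0_def using inP by simp
      qed
      also have "\<dots> = F l1 l2 (Suc (min a1 a2)) (Suc (min b1 b2))"
        unfolding D_def telescope2 F0 by simp
      finally show ?thesis using True unfolding rhs_eq lhs_key[OF l] N_def by simp
    next
      case False
      then show ?thesis unfolding rhs_eq lhs_key[OF l] N_def by auto
    qed
  qed
  have uniq: "g = g0" if Pg: "P g" for g
  proof (intro ext)
    fix m v
    show "g m v = g0 m v"
    proof (cases "m \<in> parts2 N \<and> v \<in> parts2 N")
      case False
      then show ?thesis using Pg unfolding P_def g0_def by auto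
    next
      case True
      then obtain k j where mk: "m = [N - k, k]" "2 * k \<le> N" and vj: "v = [N - j, j]" "2 * j \<le> N"
        unfolding parts2_def by auto
      define G where "G k j = g [N - k, k] [N - j, j]" for k j
      define S where "S a b = (\<Sum>k<a. \<Sum>j<b. G k j)" for a b
      have SF: "S a b = F l1 l2 a b" if "a \<le> Suc (N div 2)" "b \<le> Suc (N div 2)" for a b
      proof (cases "a = 0 \<or> b = 0")
        case True
        then show ?thesis unfolding S_def F_def by auto
      next
        case False
        then obtain al be where ab: "a = Suc al" "b = Suc be" by (meson not0_implies_Suc)
        hence m: "min (N - al) al = al" "min (N - be) be = be" using that by auto
        have "kron_lhs_coeff [l1, l2, 0, 0] (N - al) al (N - be) be = S a b"
          using Pg[unfolded P_def, THEN conjunct2, rule_format, of "N - al" al "N - be" be] that ab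
          unfolding rhs_eq m S_def G_def by simp
        thus ?thesis unfolding F_def ab N_def by simp
      qed
      have "G k j = S (Suc k) (Suc j) - S k (Suc j) - S (Suc k) j + S k j"
        unfolding S_def by (rule diff2)
      also have "\<dots> = D l1 l2 k j" unfolding D_def using mk vj by (simp add: SF)
      finally show ?thesis unfolding G_def g0_def using mk vj True by simp
    qed
  qed
  have "(THE g. P g) = g0" using Pg0 uniq by (rule the_equality)
  hence "kron [N - a, a] [N - b, b] [l1, l2, 0, 0] = g0 [N - a, a] [N - b, b]" using kd by simp
  thus ?thesis unfolding g0_def using inP a b N_def by simp
qed



lemma KS_stable:
  assumes "l2 \<le> p" "p + q + r + s = l1 + l2"
  shows "KS l1 l2 p q r s = {(x, y, z). x + y + z = l2 \<and> x \<le> q \<and> y \<le> r \<and> z \<le> s}"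
  using assms unfolding KS_def by auto

definition Q :: "nat \<Rightarrow> nat \<Rightarrow> nat \<Rightarrow> nat \<Rightarrow> (nat \<times> nat \<times> nat) set" where
  "Q l2 a b s = {(x, y, z). x + y + z = l2 \<and> x \<le> b - s \<and> y \<le> a - s \<and> z \<le> s}"

definition E :: "nat \<Rightarrow> nat \<times> nat \<Rightarrow> nat set" where
  "E l2 uv = {s. s \<le> fst uv \<and> s \<le> snd uv \<and> (fst uv - s) + (snd uv - s) \<le> l2 \<and> l2 \<le> (fst uv - s) + (snd uv - s) + s}"

lemma finite_Q: "finite (Q l2 a b s)"
proof -
  have "Q l2 a b s \<subseteq> {..l2} \<times> {..l2} \<times> {..l2}" unfolding Q_def by auto
  thus ?thesis by (rule finite_subset) auto
qed

lemma finite_E: "finite (E l2 uv)"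
proof -
  have "E l2 uv \<subseteq> {..fst uv}" unfolding E_def by auto
  thus ?thesis by (rule finite_subset) auto
qed

lemma lhs_stable:
  assumes l: "l2 \<le> l1" and ab: "a + b \<le> l1"
  shows "kron_lhs_coeff [l1, l2, 0, 0] (l1 + l2 - a) a (l1 + l2 - b) b = (\<Sum>s\<in>{..min a b}. int (card (Q l2 a b s)))"
proof -
  have "(\<Sum>s\<in>{..min a b}. int (card (Q l2 a b s))) =
        (\<Sum>(p, q, r, s) \<in> Tab (l1 + l2 - a) a (l1 + l2 - b) b. int (K l1 l2 p q r s))"
  proof (rule sum.reindex_bij_witness[where j="\<lambda>s. (l1 + l2 - a - b + s, b - s, a - s, s)" and i="\<lambda>(p, q, r, s). s"])
    fix s assume s: "s \<in> {..min a b}"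
    have "KS l1 l2 (l1 + l2 - a - b + s) (b - s) (a - s) s = Q l2 a b s"
      using s ab unfolding Q_def by (subst KS_stable) auto
    thus "(case (l1 + l2 - a - b + s, b - s, a - s, s) of (p, q, r, s) \<Rightarrow> int (K l1 l2 p q r s)) = int (card (Q l2 a b s))"
      unfolding K_def by simp
  qed (use ab in \<open>auto simp: Tab_def\<close>)
  thus ?thesis unfolding lhs_K[OF l] by simp
qed

lemma Q_E_sum:
  "(\<Sum>s\<in>{..min a b}. card (Q l2 a b s)) = (\<Sum>u\<in>{..a}. \<Sum>v\<in>{..b}. card (E l2 (u, v)))"
proof -
  have "(\<Sum>s\<in>{..min a b}. card (Q l2 a b s)) = card (SIGMA s:{..min a b}. Q l2 a b s)"
    by (rule card_SigmaI[symmetric]) (auto simp: finite_Q)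
  also have "\<dots> = card (SIGMA uv:{..a} \<times> {..b}. E l2 uv)"
  proof (rule bij_betw_same_card[where f="\<lambda>(s, x, y, z). ((y + s, x + s), s)"],
         rule bij_betw_byWitness[where f'="\<lambda>((u, v), s). (s, v - s, u - s, l2 - (u - s) - (v - s))"])
  qed (auto simp: Q_def E_def)
  also have "\<dots> = (\<Sum>uv\<in>{..a} \<times> {..b}. card (E l2 uv))"
    by (rule card_SigmaI) (auto simp: finite_E)
  also have "\<dots> = (\<Sum>u\<in>{..a}. \<Sum>v\<in>{..b}. card (E l2 (u, v)))"
    by (simp add: sum.cartesian_product)
  finally show ?thesis .
qed



lemma F_sum:
  assumes l: "l2 \<le> l1" and ab: "mu + nu \<le> l1" and A: "A \<le> Suc mu" and B: "B \<le> Suc nu"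
  shows "F l1 l2 A B = (\<Sum>u<A. \<Sum>v<B. int (card (E l2 (u, v))))"
proof (cases "A = 0 \<or> B = 0")
  case True
  then show ?thesis unfolding F_def by auto
next
  case False
  then obtain a b where ab': "A = Suc a" "B = Suc b" by (meson not0_implies_Suc)
  have "a + b \<le> l1" using ab A B ab' by auto
  hence "F l1 l2 A B = (\<Sum>s\<in>{..min a b}. int (card (Q l2 a b s)))"
    unfolding F_def ab' using lhs_stable[OF l] by simp
  also have "\<dots> = int (\<Sum>s\<in>{..min a b}. card (Q l2 a b s))" by simp
  also have "\<dots> = int (\<Sum>u\<in>{..a}. \<Sum>v\<in>{..b}. card (E l2 (u, v)))" unfolding Q_E_sum ..
  also have "\<dots> = (\<Sum>u<A. \<Sum>v<B. int (card (E l2 (u, v))))"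
    unfolding ab' lessThan_Suc_atMost by simp
  finally show ?thesis .
qed

lemma D_E:
  assumes l: "l2 \<le> l1" and ab: "mu + nu \<le> l1"
  shows "D l1 l2 mu nu = int (card (E l2 (mu, nu)))"
proof -
  define G where "G u v = int (card (E l2 (u, v)))" for u v
  define S where "S a b = (\<Sum>k<a. \<Sum>j<b. G k j)" for a b
  have "G mu nu = S (Suc mu) (Suc nu) - S mu (Suc nu) - S (Suc mu) nu + S mu nu"
    unfolding S_def by (rule diff2)
  also have "\<dots> = D l1 l2 mu nu"
    unfolding D_def S_def G_def using F_sum[OF l ab] by simp
  finally show ?thesis unfolding G_def by simp
qed

lemma card_E:
  assumes "mu \<le> l2" "nu \<le> mu"
  shows "int (card (E l2 (mu, nu))) =
    (let l = int nu + int mu - int l2 in if l \<ge> 0 then l div 2 + 1 else 0)"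
proof (cases "l2 \<le> mu + nu")
  case True
  define L where "L = mu + nu - l2"
  have "E l2 (mu, nu) = {(L + 1) div 2 .. L}"
    unfolding E_def L_def using assms True by auto
  hence "card (E l2 (mu, nu)) = L div 2 + 1" by simp
  moreover have "int nu + int mu - int l2 = int L" unfolding L_def using True by simp
  ultimately show ?thesis by (simp add: Let_def zdiv_int)
next
  case False
  hence "E l2 (mu, nu) = {}" unfolding E_def by auto
  thus ?thesis using False by (simp add: Let_def)
qed

definition R :: "nat \<Rightarrow> (nat \<times> nat) set" where "R m = {(x3, x4). x3 + 2 * x4 \<le> m}"
definition H :: "nat \<Rightarrow> (nat \<times> nat) set" where "H m = {(x3, x4). x3 + 2 * x4 = m}"

lemma finite_R: "finite (R m)"
proof -
  have "R m \<subseteq> {..m} \<times> {..m}" unfolding R_def by auto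
  thus ?thesis by (rule finite_subset) auto
qed

lemma card_H: "card (H m) = m div 2 + 1"
proof -
  have "H m = (\<lambda>x4. (m - 2 * x4, x4)) ` {..m div 2}"
    unfolding H_def by (auto simp: image_iff)
  moreover have "inj_on (\<lambda>x4. (m - 2 * x4, x4)) {..m div 2}" by (auto simp: inj_on_def)
  ultimately show ?thesis by (simp add: card_image)
qed

lemma pS_R:
  assumes "m \<le> n"
  shows "pS (int n) (int m) = int (card (R m))"
proof -
  have "{(x1 :: nat, x2 :: nat, x3 :: nat, x4 :: nat). int x1 + int x3 + int x4 = int n \<and> int x2 + int x3 + 2 * int x4 = int m}
      = {(x1, x2, x3, x4). x1 + x3 + x4 = n \<and> x2 + x3 + 2 * x4 = m}" by auto
  moreover have "card {(x1 :: nat, x2 :: nat, x3 :: nat, x4 :: nat). x1 + x3 + x4 = n \<and> x2 + x3 + 2 * x4 = m} = card (R m)"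
  proof (rule bij_betw_same_card[where f="\<lambda>(x1, x2, x3, x4). (x3, x4)"],
         rule bij_betw_byWitness[where f'="\<lambda>(x3, x4). (n - x3 - x4, m - x3 - 2 * x4, x3, x4)"])
  qed (use assms in \<open>auto simp: R_def\<close>)
  ultimately show ?thesis unfolding pS_def by simp
qed

lemma pS_diff:
  assumes "m \<le> n"
  shows "pS (int n) (int m) - pS (int n) (int m - 1) = int (m div 2 + 1)"
proof (cases m)
  case 0
  have "R 0 = {(0, 0)}" unfolding R_def by auto
  then show ?thesis using pS_R[OF assms] 0 by (simp add: pS_def)
next
  case (Suc k)
  have "R m = R k \<union> H m" unfolding R_def H_def Suc by auto
  moreover have "R k \<inter> H m = {}" unfolding R_def H_def Suc by auto
  moreover have fH: "finite (H m)"
    by (rule finite_subset[OF _ finite_R[of m]]) (auto simp: H_def R_def)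
  ultimately have "card (R m) = card (R k) + card (H m)"
    using card_Un_disjoint[OF finite_R[of k] fH] by simp
  moreover have "int m - 1 = int k" using Suc by simp
  ultimately show ?thesis using pS_R[OF assms] pS_R[of k n] assms Suc card_H[of m] by simp
qed



theorem proposition3p7:
  fixes la2 mu2 nu2 :: nat
  assumes "la2 \<ge> mu2" and "mu2 \<ge> nu2"
  shows "(\<forall>la1 la1'. la1 \<ge> la2 \<longrightarrow> la1' \<ge> la2 \<longrightarrow>
            la1 \<ge> mu2 + nu2 \<longrightarrow> la1' \<ge> mu2 + nu2 \<longrightarrow>
            kron [la1 + la2 - mu2, mu2] [la1 + la2 - nu2, nu2] [la1, la2, 0, 0] =
            kron [la1' + la2 - mu2, mu2] [la1' + la2 - nu2, nu2] [la1', la2, 0, 0])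
       \<and> (\<forall>la1. la1 \<ge> la2 \<longrightarrow> la1 \<ge> mu2 + nu2 \<longrightarrow>
            kron [la1 + la2 - mu2, mu2] [la1 + la2 - nu2, nu2] [la1, la2, 0, 0] =
            pS (int nu2) (int nu2 + int mu2 - int la2)
              - pS (int nu2) (int nu2 + int mu2 - int la2 - 1))
       \<and> pS (int nu2) (int nu2 + int mu2 - int la2)
              - pS (int nu2) (int nu2 + int mu2 - int la2 - 1)
         = (let l = int nu2 + int mu2 - int la2 in if l \<ge> 0 then l div 2 + 1 else 0)"
proof -
  define V where "V = (let l = int nu2 + int mu2 - int la2 in if l \<ge> 0 then l div 2 + 1 else 0)"
  have kv: "kron [la1 + la2 - mu2, mu2] [la1 + la2 - nu2, nu2] [la1, la2, 0, 0] = V"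
    if "la1 \<ge> la2" "la1 \<ge> mu2 + nu2" for la1
  proof -
    have "kron [la1 + la2 - mu2, mu2] [la1 + la2 - nu2, nu2] [la1, la2, 0, 0] = D la1 la2 mu2 nu2"
      by (rule kron_D) (use that assms in auto)
    also have "\<dots> = int (card (E la2 (mu2, nu2)))" by (rule D_E) (use that in auto)
    also have "\<dots> = V" unfolding V_def by (rule card_E) (use assms in auto)
    finally show ?thesis .
  qed
  have pv: "pS (int nu2) (int nu2 + int mu2 - int la2) - pS (int nu2) (int nu2 + int mu2 - int la2 - 1) = V"
  proof (cases "int nu2 + int mu2 - int la2 \<ge> 0")
    case True
    define L where "L = nu2 + mu2 - la2"
    have Li: "int nu2 + int mu2 - int la2 = int L" unfolding L_def using True by simp
    have "L \<le> nu2" unfolding L_def using assms by simp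
    from pS_diff[OF this] show ?thesis unfolding V_def Li by (simp add: zdiv_int)
  next
    case False
    then show ?thesis unfolding V_def by (simp add: pS_def)
  qed
  show ?thesis using kv pv V_def by simp
qed

end
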